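(* For $b>0$ define $f_b:[0,1]\to\mathbb{R}$ by $f_b(x)=\dfrac{(b+1)x}{b+\sqrt{1-x^2}}$. Then: (i) $b_1=\dfrac{2}{\pi-2}$ is the largest value of $b>0$ such that $\arcsin x\le f_b(x)$ for all $x\in[0,1]$; (ii) $b_2=2$ is the smallest value of $b>0$ such that $f_b(x)\le \arcsin x$ for all $x\in[0,1]$; (iii) for every $b\in(b_1,2)$ the function $h_b(x)=f_b(x)-\arcsin x$ has a root in the open interval $(0,1)$.
   Context: The functions $f_b$ are exactly the members of the family $\Phi_{a,b}(x)=\frac{ax}{b+\sqrt{1-x^2}}$ ($a,b>0$) satisfying $\Phi_{a,b}(0)=\arcsin 0$ and $\Phi_{a,b}'(0)=\arcsin'(0)$. *)

theory Defs
  imports "HOL-Analysis.Analysis"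
begin

definition f_b :: "real \<Rightarrow> real \<Rightarrow> real" where
  "f_b b x = ((b + 1) * x) / (b + sqrt (1 - x\<^sup>2))"

definition h_b :: "real \<Rightarrow> real \<Rightarrow> real" where
  "h_b b x = f_b b x - arcsin x"

end

theory Submission imports Defs begin

definition G :: "real \<Rightarrow> real \<Rightarrow> real" where
  "G b t = (b+1) * sin t - t * (b + cos t)"
definition K :: "real \<Rightarrow> real \<Rightarrow> real" where
  "K c u = u * cos u - c * sin u"

lemma half_id: "b * cos t - b + t * sin t = 4 * sin (t/2) * K (b/2) (t/2)"
proof -
  have t: "t = 2 * (t/2)" by simp
  have s: "sin t = 2 * sin (t/2) * cos (t/2)" by (subst t, rule sin_double)
  have c: "cos t = 1 - 2 * (sin (t/2))^2"
    using cos_double_sin[of "t/2"] by simp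
  show ?thesis unfolding K_def s c by (simp add: algebra_simps power2_eq_square)
qed

lemma deriv_G: "DERIV (G b) t :> 4 * sin (t/2) * K (b/2) (t/2)"
proof -
  have "DERIV (G b) t :> (b+1) * cos t - (1 * (b + cos t) + t * (- sin t))"
    unfolding G_def[abs_def] by (auto intro!: derivative_eq_intros)
  moreover have "(b+1) * cos t - (1 * (b + cos t) + t * (- sin t)) = b * cos t - b + t * sin t"
    by (simp add: algebra_simps)
  ultimately show ?thesis using half_id by simp
qed

lemma phi_mono:
  assumes "0 < u" "u \<le> v" "v < pi/2"
  shows "sin u / (u * cos u) \<le> sin v / (v * cos v)"
proof (rule DERIV_nonneg_imp_nondecreasing[OF assms(2)])
  fix x assume x: "u \<le> x" "x \<le> v"
  have x0: "0 < x" and xc: "cos x > 0" using x assms by (auto intro!: cos_gt_zero)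
  have "DERIV (\<lambda>x. sin x / (x * cos x)) x :> (cos x * (x * cos x) - sin x * (1 * cos x + x * (- sin x))) / (x * cos x)^2"
    using x0 xc by (auto intro!: derivative_eq_intros simp: power2_eq_square)
  moreover have "(cos x * (x * cos x) - sin x * (1 * cos x + x * (- sin x))) = x - sin x * cos x"
  proof -
    have e: "x * (cos x * cos x) + x * (sin x * sin x) = x"
      using sin_cos_squared_add[of x] by (simp add: power2_eq_square distrib_left[symmetric])
    show ?thesis using e by (simp add: algebra_simps)
  qed
  moreover have "sin (2*x) \<le> 2*x" using x0 by (intro sin_x_le_x) simp
  hence "sin x * cos x \<le> x" by (simp add: sin_double)
  ultimately show "\<exists>y. DERIV (\<lambda>x. sin x / (x * cos x)) x :> y \<and> 0 \<le> y"
    by (intro exI[of _ "(x - sin x * cos x) / (x * cos x)^2"]) auto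
qed

lemma K_neg_mono:
  assumes "c > 0" "0 < u" "u \<le> v" "v < pi/2" "K c u < 0"
  shows "K c v < 0"
proof -
  have cu: "cos u > 0" "cos v > 0" using assms by (auto intro!: cos_gt_zero)
  have v0: "v > 0" using assms by simp
  have "u * cos u < c * sin u" using assms unfolding K_def by simp
  hence "1 / c < sin u / (u * cos u)" using cu assms by (simp add: field_simps)
  also have "\<dots> \<le> sin v / (v * cos v)" by (rule phi_mono) (use assms in auto)
  finally have "1 / c < sin v / (v * cos v)" .
  hence "v * cos v < c * sin v" using cu v0 assms by (simp add: field_simps)
  thus ?thesis unfolding K_def by simp
qed


lemma G_0[simp]: "G b 0 = 0" by (simp add: G_def)

lemma G_cont: "continuous_on A (G b)"
  unfolding G_def by (intro continuous_intros)

lemma G_b1: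
  assumes b: "b = 2 / (pi - 2)" and t: "0 \<le> t" "t \<le> pi/2"
  shows "G b t \<ge> 0"
proof -
  have pi2: "pi - 2 > 0" using pi_gt3 by simp
  have b0: "b > 0" using b pi2 by simp
  have bb: "b * (pi - 2) = 2" using pi2 unfolding b by (simp add: field_simps)
  have "G b (pi/2) = b + 1 - pi/2 * b" by (simp add: G_def)
  also have "\<dots> = 0" using bb by (simp add: algebra_simps)
  finally have Gend: "G b (pi/2) = 0" .
  show ?thesis
  proof (cases "t > 0 \<and> K (b/2) (t/2) < 0")
    case True
    have "G b t \<ge> G b (pi/2)"
    proof (rule DERIV_nonpos_imp_nonincreasing[OF t(2)])
      fix s assume s: "t \<le> s" "s \<le> pi/2"
      have "K (b/2) (s/2) < 0"
        by (rule K_neg_mono[of _ "t/2"]) (use True s b0 pi_gt3 in simp_all)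
      moreover have "sin (s/2) \<ge> 0" using s t pi_gt3 by (intro sin_ge_zero) auto
      ultimately have "4 * sin (s/2) * K (b/2) (s/2) \<le> 0"
        by (simp add: mult_nonneg_nonpos)
      thus "\<exists>y. DERIV (G b) s :> y \<and> y \<le> 0" using deriv_G by blast
    qed
    thus ?thesis using Gend by simp
  next
    case False
    have "G b 0 \<le> G b t"
    proof (rule DERIV_nonneg_imp_nondecreasing[OF t(1)])
      fix s assume s: "0 \<le> s" "s \<le> t"
      have "K (b/2) (s/2) \<ge> 0" if "s > 0"
      proof (rule ccontr)
        assume "\<not> K (b/2) (s/2) \<ge> 0"
        have "K (b/2) (t/2) < 0"
          by (rule K_neg_mono[of _ "s/2"]) (use that s t b0 pi_gt3 \<open>\<not> K (b/2) (s/2) \<ge> 0\<close> in simp_all)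
        thus False using False that s by auto
      qed
      moreover have "sin (s/2) \<ge> 0" using s t pi_gt3 by (intro sin_ge_zero) auto
      ultimately have "4 * sin (s/2) * K (b/2) (s/2) \<ge> 0"
      proof (cases "s = 0")
        case False
        hence "K (b/2) (s/2) \<ge> 0" using s \<open>s > 0 \<Longrightarrow> K (b/2) (s/2) \<ge> 0\<close> by simp
        thus ?thesis using \<open>sin (s/2) \<ge> 0\<close> by simp
      qed simp
      thus "\<exists>y. DERIV (G b) s :> y \<and> y \<ge> 0" using deriv_G by blast
    qed
    thus ?thesis by simp
  qed
qed

lemma ucos_le_sin:
  assumes "0 \<le> u" "u \<le> pi"
  shows "u * cos u \<le> sin u"
proof -
  have "(\<lambda>u. sin u - u * cos u) 0 \<le> (\<lambda>u. sin u - u * cos u) u"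
  proof (rule DERIV_nonneg_imp_nondecreasing[OF assms(1)])
    fix x assume x: "0 \<le> x" "x \<le> u"
    have "DERIV (\<lambda>u. sin u - u * cos u) x :> cos x - (1 * cos x + x * (- sin x))"
      by (auto intro!: derivative_eq_intros)
    moreover have "cos x - (1 * cos x + x * (- sin x)) = x * sin x" by simp
    moreover have "sin x \<ge> 0" using x assms by (intro sin_ge_zero) auto
    ultimately show "\<exists>y. DERIV (\<lambda>u. sin u - u * cos u) x :> y \<and> y \<ge> 0"
      using x by (metis mult_nonneg_nonneg)
  qed
  thus ?thesis by simp
qed

lemma G_2:
  assumes t: "0 \<le> t" "t \<le> pi/2"
  shows "G 2 t \<le> 0"
proof -
  have "G 2 t \<le> G 2 0"
  proof (rule DERIV_nonpos_imp_nonincreasing[OF t(1)])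
    fix s assume s: "0 \<le> s" "s \<le> t"
    have "K (2/2) (s/2) \<le> 0" unfolding K_def using ucos_le_sin[of "s/2"] s t pi_gt3 by simp
    moreover have "sin (s/2) \<ge> 0" using s t pi_gt3 by (intro sin_ge_zero) auto
    ultimately have "4 * sin (s/2) * K (2/2) (s/2) \<le> 0"
      by (simp add: mult_nonneg_nonpos)
    thus "\<exists>y. DERIV (G 2) s :> y \<and> y \<le> 0" using deriv_G by blast
  qed
  thus ?thesis by simp
qed

lemma K_pos_small:
  assumes c: "0 \<le> c" "c < 1" and u: "0 < u" "u \<le> 1/2" "u \<le> 1 - c"
  shows "K c u > 0"
proof -
  have s2: "sin (u/2) \<le> u/2" using u by (intro sin_x_le_x) simp
  have s2': "sin (u/2) \<ge> 0" using u pi_gt3 by (intro sin_ge_zero) auto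
  have "(sin (u/2))^2 \<le> (u/2)^2" using s2 s2' by (intro power_mono) auto
  hence cosb: "cos u \<ge> 1 - u^2/2"
    using cos_double_sin[of "u/2"] by (simp add: power2_eq_square)
  have sinb: "c * sin u \<le> c * u" using u c by (intro mult_left_mono sin_x_le_x) auto
  have "u * (1 - u^2/2) \<le> u * cos u" using cosb u by (intro mult_left_mono) auto
  moreover have "u^2 \<le> (1 - c) / 2"
  proof -
    have "u * u \<le> (1 - c) * (1/2)" using u c by (intro mult_mono) auto
    thus ?thesis by (simp add: power2_eq_square)
  qed
  moreover have "u * (1 - u^2/2) - c * u = u * (1 - c - u^2/2)" by (simp add: algebra_simps)
  moreover have "u * (1 - c - u^2/2) > 0" using u c \<open>u^2 \<le> (1 - c) / 2\<close> by (intro mult_pos_pos) auto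
  ultimately show ?thesis unfolding K_def using sinb by linarith
qed

lemma G_pos:
  assumes b: "0 < b" "b < 2"
  shows "\<exists>t. 0 < t \<and> t < pi/2 \<and> G b t > 0"
proof -
  define u0 where "u0 = min (1/2) (1 - b/2)"
  have u0: "0 < u0" "u0 \<le> 1/2" "u0 \<le> 1 - b/2" using b by (auto simp: u0_def min_def)
  have der: "\<exists>y. DERIV (G b) s :> y \<and> y > 0" if s: "0 < s" "s < 2*u0" for s
  proof -
    have "K (b/2) (s/2) > 0" by (rule K_pos_small) (use s u0 b in auto)
    moreover have "sin (s/2) > 0" using s u0 pi_gt3 by (intro sin_gt_zero) auto
    ultimately have "4 * sin (s/2) * K (b/2) (s/2) > 0" by simp
    thus ?thesis using deriv_G by blast
  qed
  have "G b 0 < G b (2*u0)"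
    by (rule DERIV_pos_imp_increasing_open[of 0 "2*u0" "G b", OF _ der G_cont]) (use u0 in auto)
  moreover have "2 * u0 < pi/2" using u0 pi_gt3 by simp
  ultimately show ?thesis using u0 by (intro exI[of _ "2*u0"]) auto
qed

lemma conv:
  assumes b: "b > 0" and t: "0 \<le> t" "t \<le> pi/2"
  shows "f_b b (sin t) - arcsin (sin t) = G b t / (b + cos t)"
proof -
  have c: "cos t \<ge> 0" using t by (intro cos_ge_zero) auto
  have "sqrt (1 - (sin t)^2) = cos t" using c by (simp add: cos_squared_eq[symmetric])
  moreover have "arcsin (sin t) = t" using t pi_gt3 by (intro arcsin_sin) auto
  moreover have "b + cos t > 0" using b c by simp
  ultimately have d: "b + cos t \<noteq> 0" by simp
  have "f_b b (sin t) = (b+1) * sin t / (b + cos t)"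
    unfolding f_b_def using \<open>sqrt (1 - (sin t)^2) = cos t\<close> by simp
  moreover have "(b+1) * sin t / (b + cos t) - t = ((b+1) * sin t - t * (b + cos t)) / (b + cos t)"
    using d by (simp add: diff_divide_distrib)
  ultimately show ?thesis unfolding G_def using \<open>arcsin (sin t) = t\<close> by simp
qed

lemma conv2:
  assumes b: "b > 0" and x: "0 \<le> x" "x \<le> 1"
  shows "\<exists>t. 0 \<le> t \<and> t \<le> pi/2 \<and> x = sin t \<and> b + cos t > 0 \<and> f_b b x - arcsin x = G b t / (b + cos t)"
proof -
  define t where "t = arcsin x"
  have t: "0 \<le> t" "t \<le> pi/2" using x arcsin_nonneg arcsin_bounded unfolding t_def by auto
  have xs: "x = sin t" using x unfolding t_def by simp
  have "cos t \<ge> 0" using t by (intro cos_ge_zero) auto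
  hence bc: "b + cos t > 0" using b by simp
  have e: "f_b b x - arcsin x = G b t / (b + cos t)" using conv[OF b t] unfolding xs[symmetric] .
  show ?thesis using t xs bc e by blast
qed


lemma h_cont:
  assumes b: "b > 0"
  shows "continuous_on {0..1} (h_b b)"
proof -
  have "continuous_on {0..1} (\<lambda>x. (b + 1) * x / (b + sqrt (1 - x\<^sup>2)) - arcsin x)"
  proof (intro continuous_intros ballI)
    fix x :: real assume x: "x \<in> {0..1}"
    have "x\<^sup>2 \<le> 1" using x by (intro power_le_one) auto
    hence "sqrt (1 - x\<^sup>2) \<ge> 0" by simp
    thus "b + sqrt (1 - x\<^sup>2) \<noteq> 0" using b by linarith
  next
    fix x :: real assume "x \<in> {0..1}"
    thus "-1 \<le> x \<and> x \<le> 1" by auto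
  qed
  thus ?thesis unfolding h_b_def[abs_def] f_b_def by simp
qed

theorem mainTheorem2:
  shows "(let S = {b::real. b > 0 \<and> (\<forall>x\<in>{0..1}. arcsin x \<le> f_b b x)}
          in 2 / (pi - 2) \<in> S \<and> (\<forall>b\<in>S. b \<le> 2 / (pi - 2)))
       \<and> (let T = {b::real. b > 0 \<and> (\<forall>x\<in>{0..1}. f_b b x \<le> arcsin x)}
          in 2 \<in> T \<and> (\<forall>b\<in>T. 2 \<le> b))
       \<and> (\<forall>b\<in>{2 / (pi - 2)<..<2}. \<exists>x\<in>{0<..<1}. h_b b x = 0)"
proof -
  have pi2: "pi - 2 > 0" using pi_gt3 by simp
  define b1 where "b1 = 2 / (pi - 2)"
  have b10: "b1 > 0" using pi2 unfolding b1_def by simp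
  have f1: "f_b b 1 = (b + 1) / b" for b unfolding f_b_def by simp
  have A1: "arcsin x \<le> f_b b1 x" if x: "x \<in> {0..1}" for x
  proof -
    have x1: "0 \<le> x" "x \<le> 1" using x by auto
    obtain t where t: "0 \<le> t" "t \<le> pi/2" "b1 + cos t > 0" "f_b b1 x - arcsin x = G b1 t / (b1 + cos t)"
      using conv2[OF b10 x1] by blast
    have "G b1 t \<ge> 0" using G_b1[OF b1_def t(1,2)] .
    hence "G b1 t / (b1 + cos t) \<ge> 0" using t(3) by simp
    thus ?thesis using t(4) by simp
  qed
  have A2: "b \<le> b1" if b: "b > 0" "\<forall>x\<in>{0..1}. arcsin x \<le> f_b b x" for b
  proof -
    have "pi/2 \<le> (b + 1) / b" using b(2)[rule_format, of 1] f1 by simp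
    hence "pi/2 * b \<le> b + 1" using b(1) by (simp add: pos_le_divide_eq)
    hence "b * (pi - 2) \<le> 2" by (simp add: algebra_simps)
    thus ?thesis unfolding b1_def using pi2 by (simp add: pos_le_divide_eq)
  qed
  have B1: "f_b 2 x \<le> arcsin x" if x: "x \<in> {0..1}" for x
  proof -
    have x1: "0 \<le> x" "x \<le> 1" using x by auto
    obtain t where t: "0 \<le> t" "t \<le> pi/2" "2 + cos t > 0" "f_b 2 x - arcsin x = G 2 t / (2 + cos t)"
      using conv2[of 2, OF _ x1] by fastforce
    have "G 2 t \<le> 0" using G_2[OF t(1,2)] .
    hence "G 2 t / (2 + cos t) \<le> 0" using t(3) by (simp add: divide_nonpos_pos)
    thus ?thesis using t(4) by simp
  qed
  have pos: "\<exists>x. 0 < x \<and> x \<le> 1 \<and> h_b b x > 0" if b: "0 < b" "b < 2" for b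
  proof -
    obtain t where t: "0 < t" "t < pi/2" "G b t > 0" using G_pos[OF b] by auto
    have st: "0 < sin t" "sin t \<le> 1" using t pi_gt3 by (auto intro!: sin_gt_zero)
    have ct: "cos t \<ge> 0" using t by (intro cos_ge_zero) auto
    have "f_b b (sin t) - arcsin (sin t) = G b t / (b + cos t)" using conv[OF b(1) less_imp_le[OF t(1)] less_imp_le[OF t(2)]] .
    moreover have "G b t / (b + cos t) > 0" using t ct b by simp
    ultimately show ?thesis using st unfolding h_b_def by (intro exI[of _ "sin t"]) auto
  qed
  have B2: "2 \<le> b" if b: "b > 0" "\<forall>x\<in>{0..1}. f_b b x \<le> arcsin x" for b
  proof (rule ccontr)
    assume "\<not> 2 \<le> b"
    then obtain x where x: "0 < x" "x \<le> 1" "h_b b x > 0" using pos[of b] b by auto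
    thus False using b(2)[rule_format, of x] unfolding h_b_def by auto
  qed
  have C: "\<exists>x\<in>{0<..<1}. h_b b x = 0" if b: "b1 < b" "b < 2" for b
  proof -
    have b0: "b > 0" using b b10 by simp
    obtain x0 where x0: "0 < x0" "x0 \<le> 1" "h_b b x0 > 0" using pos[of b] b0 b by auto
    have "b * (pi - 2) > 2" using b(1) pi2 unfolding b1_def by (simp add: pos_divide_less_eq)
    hence "b + 1 < pi/2 * b" by (simp add: algebra_simps)
    hence "(b + 1) / b < pi/2" using b0 by (simp add: pos_divide_less_eq)
    hence h1: "h_b b 1 < 0" unfolding h_b_def f1 by simp
    have "\<exists>x. x0 \<le> x \<and> x \<le> 1 \<and> h_b b x = 0"
      by (rule IVT2') (use h1 x0 in \<open>auto intro: continuous_on_subset[OF h_cont[OF b0]]\<close>)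
    then obtain x where x: "x0 \<le> x" "x \<le> 1" "h_b b x = 0" by auto
    have "x \<noteq> x0" "x \<noteq> 1" using x x0 h1 by auto
    thus ?thesis using x x0 by auto
  qed
  show ?thesis
    unfolding Let_def b1_def[symmetric]
  proof (intro conjI ballI)
    show "b1 \<in> {b. 0 < b \<and> (\<forall>x\<in>{0..1}. arcsin x \<le> f_b b x)}" using A1 b10 by blast
    show "2 \<in> {b. 0 < b \<and> (\<forall>x\<in>{0..1}. f_b b x \<le> arcsin x)}" using B1 by simp
  next
    fix b assume "b \<in> {b. 0 < b \<and> (\<forall>x\<in>{0..1}. arcsin x \<le> f_b b x)}"
    thus "b \<le> b1" using A2 by blast
  next
    fix b assume "b \<in> {b. 0 < b \<and> (\<forall>x\<in>{0..1}. f_b b x \<le> arcsin x)}"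
    thus "2 \<le> b" using B2 by blast
  next
    fix b assume "b \<in> {b1<..<2}"
    thus "\<exists>x\<in>{0<..<1}. h_b b x = 0" using C by simp
  qed
qed

end
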